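(* Let $f\in\mathbb{Z}[x,y]$ be square-free without non-constant factors in $\mathbb{Z}[x]$, $C=V(f)$, $R(x)=\operatorname{res}(f,f_y,y)$. Let $\alpha$ be a real root of $R$, $\alpha'$ the next larger real root of $R$ (or $+\infty$), $I=(\alpha,\alpha')$, and let $\varphi_1<\cdots<\varphi_{m_I}$ be the continuous functions on $I$ whose graphs form $C\cap(I\times\mathbb{R})$. Let $y_1<\cdots<y_{m_\alpha}$ be the real roots of $f(\alpha,y)$ and let $t_1<y_1<t_2<\cdots<y_{m_\alpha}<t_{m_\alpha+1}$ be rational numbers. Let $b\in I$ be rational such that $f(x,t_i)\neq 0$ for all $x\in[\alpha,b]$ and all $i=1,\ldots,m_\alpha+1$. Let $\gamma_j:=\varphi_j(b)$ be the $j$-th real root of $f(b,y)$. If $t_{i_0}<\gamma_j<t_{i_0+1}$ for some $i_0\in\{1,\ldots,m_\alpha\}$, then $\lim_{x\to\alpha^+}\varphi_j(x)=y_{i_0}$. If $\gamma_j<t_1$ (resp. $\gamma_j>t_{m_\alpha+1}$), then $\varphi_j(x)\to-\infty$ (resp. $+\infty$) as $x\to\alpha^+$.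
   Context: $\operatorname{res}(\cdot,\cdot,y)$ denotes the resultant with respect to $y$. The functions $\varphi_j$ exist by delineability of $C$ over intervals between consecutive real roots of $R$; each arc of $C$ over $I$ either tends to a real root of $f(\alpha,y)$ or to $\pm\infty$ as $x\to\alpha^+$. *)

theory Defs
  imports "HOL-Analysis.Analysis" "HOL-Computational_Algebra.Squarefree"
    "Subresultants.Resultant_Prelim"
begin

text \<open>Bivariate integer polynomials f(x,y) are represented as int poly poly:
  a polynomial in y whose coefficients are polynomials in x.\<close>

definition eval2 :: "int poly poly \<Rightarrow> real \<Rightarrow> real \<Rightarrow> real" where
  "eval2 f x y = poly (map_poly (\<lambda>c. poly (of_int_poly c) x) f) y"

definition res_y :: "int poly poly \<Rightarrow> int poly" where
  "res_y f = resultant f (pderiv f)"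

end

theory Submission
  imports Defs
begin

lemma eval2_sum: "eval2 f x y = (\<Sum>i\<le>degree f. poly (of_int_poly (coeff f i)) x * y ^ i)"
proof -
  let ?p = "map_poly (\<lambda>c. poly (of_int_poly c) x) f"
  have d: "degree ?p \<le> degree f" by (rule degree_map_poly_le)
  have "eval2 f x y = poly (\<Sum>i\<le>degree f. monom (coeff ?p i) i) y"
    unfolding eval2_def using poly_as_sum_of_monoms'[OF d] by simp
  also have "\<dots> = (\<Sum>i\<le>degree f. coeff ?p i * y ^ i)"
    by (simp add: poly_sum poly_monom)
  also have "\<dots> = (\<Sum>i\<le>degree f. poly (of_int_poly (coeff f i)) x * y ^ i)"
    by (simp add: coeff_map_poly)
  finally show ?thesis .
qed

lemma cont_eval2: "continuous_on UNIV (\<lambda>p. eval2 f (fst p) (snd p))"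
  unfolding eval2_sum by (intro continuous_intros)

lemma near_nonzero:
  fixes g :: "real \<times> real \<Rightarrow> real"
  assumes g: "continuous_on UNIV g" and K: "compact K"
    and nz: "\<forall>y\<in>K. g (a, y) \<noteq> 0"
  shows "\<exists>\<eta>>0. \<forall>x y. \<bar>x - a\<bar> < \<eta> \<longrightarrow> y \<in> K \<longrightarrow> g (x, y) \<noteq> 0"
proof (cases "K = {}")
  case True then show ?thesis by (auto intro: exI[of _ 1])
next
  case False
  have "continuous_on K (\<lambda>y. \<bar>g (a, y)\<bar>)"
    by (intro continuous_intros continuous_on_compose2[OF g]) auto
  then obtain y0 where y0: "y0 \<in> K" "\<forall>y\<in>K. \<bar>g (a, y0)\<bar> \<le> \<bar>g (a, y)\<bar>"
    using continuous_attains_inf[OF K False] by blast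
  define m where "m = \<bar>g (a, y0)\<bar>"
  have m: "m > 0" using nz y0 by (auto simp: m_def)
  have S: "compact (cball a 1 \<times> K)" by (intro compact_Times K compact_cball)
  have "uniformly_continuous_on (cball a 1 \<times> K) g"
    by (rule compact_uniformly_continuous[OF continuous_on_subset[OF g] S]) auto
  then obtain d where d: "d > 0" "\<forall>p\<in>cball a 1 \<times> K. \<forall>q\<in>cball a 1 \<times> K. dist q p < d \<longrightarrow> dist (g q) (g p) < m"
    using m unfolding uniformly_continuous_on_def by metis
  show ?thesis
  proof (intro exI[of _ "min d 1"] conjI allI impI)
    show "min d 1 > 0" using d by simp
    fix x y assume xy: "\<bar>x - a\<bar> < min d 1" "y \<in> K"
    have "dist (x, y) (a, y) < d" using xy by (simp add: dist_Pair_Pair dist_real_def)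
    moreover have "(x, y) \<in> cball a 1 \<times> K" "(a, y) \<in> cball a 1 \<times> K"
      using xy by (auto simp: dist_real_def)
    ultimately have "dist (g (x, y)) (g (a, y)) < m" using d by blast
    moreover have "m \<le> \<bar>g (a, y)\<bar>" using y0 xy by (simp add: m_def)
    ultimately show "g (x, y) \<noteq> 0" by (auto simp: dist_real_def)
  qed
qed

lemma stay_below:
  fixes \<phi> :: "real \<Rightarrow> real"
  assumes c: "continuous_on {a<..b} \<phi>" and ne: "\<forall>x\<in>{a<..b}. \<phi> x \<noteq> v" and lt: "\<phi> b < v"
  shows "\<forall>x\<in>{a<..b}. \<phi> x < v"
proof (intro ballI, rule ccontr)
  fix x assume x: "x \<in> {a<..b}" "\<not> \<phi> x < v"
  have "\<exists>z. x \<le> z \<and> z \<le> b \<and> \<phi> z = v"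
    by (rule IVT2') (use x lt in \<open>auto intro: continuous_on_subset[OF c]\<close>)
  then show False using ne x by force
qed

lemma stay_above:
  fixes \<phi> :: "real \<Rightarrow> real"
  assumes c: "continuous_on {a<..b} \<phi>" and ne: "\<forall>x\<in>{a<..b}. \<phi> x \<noteq> v" and lt: "\<phi> b > v"
  shows "\<forall>x\<in>{a<..b}. \<phi> x > v"
proof (intro ballI, rule ccontr)
  fix x assume x: "x \<in> {a<..b}" "\<not> \<phi> x > v"
  have "\<exists>z. x \<le> z \<and> z \<le> b \<and> \<phi> z = v"
    by (rule IVT') (use x lt in \<open>auto intro: continuous_on_subset[OF c]\<close>)
  then show False using ne x by force
qed

theorem mainTheorem5:
  fixes f :: "int poly poly"
    and \<alpha> :: real and b :: rat
    and mI :: nat and \<phi> :: "nat \<Rightarrow> real \<Rightarrow> real"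
    and ma :: nat and ys :: "nat \<Rightarrow> real" and t :: "nat \<Rightarrow> rat"
    and j :: nat
  defines "R \<equiv> res_y f"
  defines "I \<equiv> {x::real. \<alpha> < x \<and> (\<forall>z. \<alpha> < z \<and> z \<le> x \<longrightarrow> poly (of_int_poly R) z \<noteq> 0)}"
  assumes sqf: "squarefree f"
    and no_x_factor: "\<forall>g::int poly. [:g:] dvd f \<longrightarrow> degree g = 0"
    and alpha_root: "poly (of_int_poly R) \<alpha> = 0"
    and phi_cont: "\<forall>k\<in>{1..mI}. continuous_on I (\<phi> k)"
    and phi_mono: "\<forall>x\<in>I. \<forall>k\<in>{1..mI}. \<forall>l\<in>{1..mI}. k < l \<longrightarrow> \<phi> k x < \<phi> l x"
    and phi_graph: "\<forall>x\<in>I. {y. eval2 f x y = 0} = (\<lambda>k. \<phi> k x) ` {1..mI}"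
    and ys_mono: "\<forall>k\<in>{1..ma}. \<forall>l\<in>{1..ma}. k < l \<longrightarrow> ys k < ys l"
    and ys_roots: "{y. eval2 f \<alpha> y = 0} = ys ` {1..ma}"
    and t_sep: "\<forall>i\<in>{1..ma}. real_of_rat (t i) < ys i \<and> ys i < real_of_rat (t (i + 1))"
    and b_in: "real_of_rat b \<in> I"
    and t_nonzero: "\<forall>x\<in>{\<alpha>..real_of_rat b}. \<forall>i\<in>{1..ma + 1}. eval2 f x (real_of_rat (t i)) \<noteq> 0"
    and j_range: "j \<in> {1..mI}"
  shows "(\<forall>i0\<in>{1..ma}. real_of_rat (t i0) < \<phi> j (real_of_rat b) \<and>
             \<phi> j (real_of_rat b) < real_of_rat (t (i0 + 1)) \<longrightarrow>
             (\<phi> j \<longlongrightarrow> ys i0) (at_right \<alpha>))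
      \<and> (\<phi> j (real_of_rat b) < real_of_rat (t 1) \<longrightarrow> filterlim (\<phi> j) at_bot (at_right \<alpha>))
      \<and> (\<phi> j (real_of_rat b) > real_of_rat (t (ma + 1)) \<longrightarrow> filterlim (\<phi> j) at_top (at_right \<alpha>))"
  proof -
  let ?g = "\<lambda>p. eval2 f (fst p) (snd p)"
  let ?b = "real_of_rat b"
  let ?T = "\<lambda>i. real_of_rat (t i)"
  have g: "continuous_on UNIV ?g" by (rule cont_eval2)
  have ab: "\<alpha> < ?b" using b_in by (simp add: I_def)
  have sub: "{\<alpha><..?b} \<subseteq> I" using b_in by (auto simp: I_def)
  have cphi: "continuous_on {\<alpha><..?b} (\<phi> j)"
    using phi_cont j_range continuous_on_subset[OF _ sub] by blast
  have root: "eval2 f x (\<phi> j x) = 0" if "x \<in> {\<alpha><..?b}" for x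
  proof -
    have "\<phi> j x \<in> (\<lambda>k. \<phi> k x) ` {1..mI}" using j_range by blast
    then show ?thesis using phi_graph sub that by blast
  qed
  have tnz: "eval2 f x (?T i) \<noteq> 0" if "x \<in> {\<alpha>..?b}" "i \<in> {1..ma+1}" for x i
    using t_nonzero that by blast
  have ne: "\<forall>x\<in>{\<alpha><..?b}. \<phi> j x \<noteq> ?T i" if "i \<in> {1..ma+1}" for i
    using root tnz[OF _ that] by fastforce
  have alroot: "\<exists>k\<in>{1..ma}. y = ys k" if "eval2 f \<alpha> y = 0" for y
    using ys_roots that by blast
  have ev: "eventually (\<lambda>x. \<phi> j x \<notin> K) (at_right \<alpha>)"
    if K: "compact K" "\<forall>y\<in>K. eval2 f \<alpha> y \<noteq> 0" for K
  proof -
    obtain \<eta> where \<eta>: "\<eta> > 0" "\<forall>x y. \<bar>x - \<alpha>\<bar> < \<eta> \<longrightarrow> y \<in> K \<longrightarrow> ?g (x, y) \<noteq> 0"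
      using near_nonzero[OF g K(1), of \<alpha>] K(2) by force
    show ?thesis unfolding eventually_at_right_field
    proof (intro exI[of _ "min (\<alpha> + \<eta>) ?b"] conjI allI impI)
      show "\<alpha> < min (\<alpha> + \<eta>) ?b" using \<eta> ab by simp
      fix x assume x: "\<alpha> < x" "x < min (\<alpha> + \<eta>) ?b"
      show "\<phi> j x \<notin> K"
      proof
        assume "\<phi> j x \<in> K"
        then have "?g (x, \<phi> j x) \<noteq> 0" using \<eta> x by auto
        then show False using root[of x] x by simp
      qed
    qed
  qed
  have part1: "(\<phi> j \<longlongrightarrow> ys i0) (at_right \<alpha>)"
    if i0: "i0 \<in> {1..ma}" and lo: "?T i0 < \<phi> j ?b" and hi: "\<phi> j ?b < ?T (i0 + 1)" for i0
  proof -
    have lo': "\<forall>x\<in>{\<alpha><..?b}. \<phi> j x > ?T i0"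
      by (rule stay_above[OF cphi ne lo]) (use i0 in auto)
    have hi': "\<forall>x\<in>{\<alpha><..?b}. \<phi> j x < ?T (i0+1)"
      by (rule stay_below[OF cphi ne hi]) (use i0 in auto)
    have uniq: "k = i0" if k: "k \<in> {1..ma}" "?T i0 \<le> ys k" "ys k \<le> ?T (i0+1)" for k
    proof (rule ccontr)
      assume "k \<noteq> i0"
      then consider "k < i0" | "k > i0" by linarith
      then show False
      proof cases
        case 1
        have "ys k \<le> ys (i0 - 1)" using ys_mono[rule_format, of k "i0 - 1"] k i0 1
          by (cases "k = i0 - 1") (auto intro: less_imp_le)
        moreover have "ys (i0 - 1) < ?T i0" proof -
          have "i0 - 1 \<in> {1..ma}" using k i0 1 by auto
          then show ?thesis using t_sep[rule_format, of "i0 - 1"] 1 by auto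
        qed
        ultimately show False using k by linarith
      next
        case 2
        have "ys (i0 + 1) \<le> ys k" using ys_mono[rule_format, of "i0 + 1" k] k i0 2
          by (cases "k = i0 + 1") (auto intro: less_imp_le)
        moreover have "?T (i0 + 1) < ys (i0 + 1)" using t_sep[rule_format, of "i0 + 1"] i0 2 k by auto
        ultimately show False using k by linarith
      qed
    qed
    show ?thesis unfolding tendsto_iff
    proof (intro allI impI)
      fix e :: real assume e: "e > 0"
      let ?K = "{?T i0 .. ys i0 - e} \<union> {ys i0 + e .. ?T (i0+1)}"
      have K: "compact ?K" by (intro compact_Un compact_Icc)
      have Knz: "\<forall>y\<in>?K. eval2 f \<alpha> y \<noteq> 0"
      proof
        fix y assume y: "y \<in> ?K"
        show "eval2 f \<alpha> y \<noteq> 0"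
        proof
          assume r: "eval2 f \<alpha> y = 0"
          then obtain k where k: "k \<in> {1..ma}" "y = ys k" using alroot by blast
          moreover have "?T i0 < ys i0" "ys i0 < ?T (i0+1)" using t_sep i0 by auto
          ultimately have "k = i0" using uniq[of k] y e by auto
          then show False using k y e by auto
        qed
      qed
      have ev2: "eventually (\<lambda>x. x \<in> {\<alpha><..?b}) (at_right \<alpha>)"
        unfolding eventually_at_right_field using ab by (intro exI[of _ ?b]) auto
      show "eventually (\<lambda>x. dist (\<phi> j x) (ys i0) < e) (at_right \<alpha>)"
        using ev[OF K Knz] ev2
      proof eventually_elim
        case (elim x)
        have "?T i0 < \<phi> j x" "\<phi> j x < ?T (i0+1)" using lo' hi' elim by auto
        then show ?case using elim by (auto simp: dist_real_def)
      qed
    qed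
  qed
  have ev2: "eventually (\<lambda>x. x \<in> {\<alpha><..?b}) (at_right \<alpha>)"
    unfolding eventually_at_right_field using ab by (intro exI[of _ ?b]) auto
  have part2: "filterlim (\<phi> j) at_bot (at_right \<alpha>)" if lt: "\<phi> j ?b < ?T 1"
  proof -
    have lt': "\<forall>x\<in>{\<alpha><..?b}. \<phi> j x < ?T 1"
      by (rule stay_below[OF cphi ne lt]) auto
    show ?thesis unfolding filterlim_at_bot
    proof
      fix Z :: real
      let ?M = "min Z (?T 1 - 1)"
      have Knz: "\<forall>y\<in>{?M..?T 1}. eval2 f \<alpha> y \<noteq> 0"
      proof
        fix y assume y: "y \<in> {?M..?T 1}"
        show "eval2 f \<alpha> y \<noteq> 0"
        proof
          assume r: "eval2 f \<alpha> y = 0"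
          show False
          proof (cases "y = ?T 1")
            case True then show False using r tnz[of \<alpha> 1] ab by auto
          next
            case False
            obtain k where k: "k \<in> {1..ma}" "y = ys k" using alroot r by blast
            have "ys 1 \<le> ys k" using ys_mono[rule_format, of 1 k] k by (cases "k = 1") (auto intro: less_imp_le)
            moreover have "?T 1 < ys 1" using t_sep k by auto
            ultimately show False using y k by auto
          qed
        qed
      qed
      show "eventually (\<lambda>x. \<phi> j x \<le> Z) (at_right \<alpha>)"
        using ev[OF compact_Icc Knz] ev2
      proof eventually_elim
        case (elim x)
        then show ?case using lt'[rule_format, of x] by auto
      qed
    qed
  qed
  have part3: "filterlim (\<phi> j) at_top (at_right \<alpha>)" if gt: "\<phi> j ?b > ?T (ma+1)"
  proof -
    have gt': "\<forall>x\<in>{\<alpha><..?b}. \<phi> j x > ?T (ma+1)"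
      by (rule stay_above[OF cphi ne gt]) auto
    show ?thesis unfolding filterlim_at_top
    proof
      fix Z :: real
      let ?M = "max Z (?T (ma+1) + 1)"
      have Knz: "\<forall>y\<in>{?T (ma+1)..?M}. eval2 f \<alpha> y \<noteq> 0"
      proof
        fix y assume y: "y \<in> {?T (ma+1)..?M}"
        show "eval2 f \<alpha> y \<noteq> 0"
        proof
          assume r: "eval2 f \<alpha> y = 0"
          show False
          proof (cases "y = ?T (ma+1)")
            case True then show False using r tnz[of \<alpha> "ma+1"] ab by auto
          next
            case False
            obtain k where k: "k \<in> {1..ma}" "y = ys k" using alroot r by blast
            have "ys k \<le> ys ma" using ys_mono[rule_format, of k ma] k by (cases "k = ma") (auto intro: less_imp_le)
            moreover have "ys ma < ?T (ma+1)" using t_sep k by auto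
            ultimately show False using y k by auto
          qed
        qed
      qed
      show "eventually (\<lambda>x. \<phi> j x \<ge> Z) (at_right \<alpha>)"
        using ev[OF compact_Icc Knz] ev2
      proof eventually_elim
        case (elim x)
        then show ?case using gt'[rule_format, of x] by auto
      qed
    qed
  qed
  show ?thesis using part1 part2 part3 by blast
qed

end
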